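(* Let $(G,S,k)$ be an instance of \textsc{Edge Subset Feedback Vertex Set}, let $T=V(S)$, let $X$ be a dominant solution for $(G,S,k)$, and let $x$ be any vertex of $X_0=X\setminus T$. Then there exist $|X|+2$ paths in $G-S$, each starting in $T$ and ending in $X$, that are pairwise vertex-disjoint except for three of the paths, which all end in $x$ (and share only this vertex). Moreover, these paths can be chosen so that every connected component of $G-X-S$ is intersected by at most one of the paths.
   Context: Graphs are finite and undirected and may contain loops and parallel edges (so cycles of length one and two are allowed). An instance of \textsc{Edge Subset Feedback Vertex Set} is $(G,S,k)$ with $G=(V,E)$, $S\subseteq E$, $k\in\mathbb{N}$. An $S$-cycle is a cycle containing at least one edge of $S$. A solution is a set $X\subseteq V$ with $|X|\le k$ such that $G-X$ contains no $S$-cycle. $V(S)$ denotes the set of vertices incident with at least one edge of $S$. $G-S$ denotes $(V,E\setminus S)$ and $G-X-S$ denotes $(G-X)-S$. A solution $X$ is dominant if it has minimum size among all solutions and, among minimum-size solutions, contains the maximum possible number of vertices of $T=V(S)$. Paths may have length zero (a single vertex). *)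

theory Defs
  imports Main
begin

text \<open>Finite multigraphs with loops and parallel edges: vertex set V, edge set E,
  and an incidence map ends assigning to each edge its set of end vertices
  (one vertex for a loop, two for an ordinary edge).\<close>

definition multigraph :: "'v set \<Rightarrow> 'e set \<Rightarrow> ('e \<Rightarrow> 'v set) \<Rightarrow> bool" where
  "multigraph V E ends \<longleftrightarrow> finite V \<and> finite E \<and>
     (\<forall>e\<in>E. ends e \<subseteq> V \<and> 1 \<le> card (ends e) \<and> card (ends e) \<le> 2)"

definition del_verts_E :: "'e set \<Rightarrow> ('e \<Rightarrow> 'v set) \<Rightarrow> 'v set \<Rightarrow> 'e set" where
  "del_verts_E E ends X = {e \<in> E. ends e \<inter> X = {}}"

text \<open>A cycle: vertices v_0..v_{n-1} (distinct), edges e_0..e_{n-1} (distinct),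
  n \<ge> 1, edge e_i joining v_i and v_{i+1 mod n}. Length 1 = loop, length 2 = two parallel edges.\<close>
definition is_cycle :: "'v set \<Rightarrow> 'e set \<Rightarrow> ('e \<Rightarrow> 'v set) \<Rightarrow> 'v list \<Rightarrow> 'e list \<Rightarrow> bool" where
  "is_cycle V E ends vs es \<longleftrightarrow> vs \<noteq> [] \<and> length es = length vs \<and> distinct vs \<and> distinct es \<and>
     set vs \<subseteq> V \<and> set es \<subseteq> E \<and>
     (\<forall>i < length vs. ends (es ! i) = {vs ! i, vs ! ((i + 1) mod length vs)})"

definition is_S_cycle :: "'v set \<Rightarrow> 'e set \<Rightarrow> ('e \<Rightarrow> 'v set) \<Rightarrow> 'e set \<Rightarrow> 'v list \<Rightarrow> 'e list \<Rightarrow> bool" where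
  "is_S_cycle V E ends S vs es \<longleftrightarrow> is_cycle V E ends vs es \<and> set es \<inter> S \<noteq> {}"

definition esfvs_solution :: "'v set \<Rightarrow> 'e set \<Rightarrow> ('e \<Rightarrow> 'v set) \<Rightarrow> 'e set \<Rightarrow> nat \<Rightarrow> 'v set \<Rightarrow> bool" where
  "esfvs_solution V E ends S k X \<longleftrightarrow> X \<subseteq> V \<and> card X \<le> k \<and>
     \<not> (\<exists>vs es. is_S_cycle (V - X) (del_verts_E E ends X) ends S vs es)"

definition verts_of :: "('e \<Rightarrow> 'v set) \<Rightarrow> 'e set \<Rightarrow> 'v set" where
  "verts_of ends S = (\<Union>e\<in>S. ends e)"

definition dominant_solution :: "'v set \<Rightarrow> 'e set \<Rightarrow> ('e \<Rightarrow> 'v set) \<Rightarrow> 'e set \<Rightarrow> nat \<Rightarrow> 'v set \<Rightarrow> bool" where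
  "dominant_solution V E ends S k X \<longleftrightarrow> esfvs_solution V E ends S k X \<and>
     (\<forall>Y. esfvs_solution V E ends S k Y \<longrightarrow> card X \<le> card Y) \<and>
     (\<forall>Y. esfvs_solution V E ends S k Y \<longrightarrow> card Y = card X \<longrightarrow>
          card (Y \<inter> verts_of ends S) \<le> card (X \<inter> verts_of ends S))"

definition is_path :: "'v set \<Rightarrow> 'e set \<Rightarrow> ('e \<Rightarrow> 'v set) \<Rightarrow> 'v list \<Rightarrow> bool" where
  "is_path V E ends p \<longleftrightarrow> p \<noteq> [] \<and> distinct p \<and> set p \<subseteq> V \<and>
     (\<forall>i. Suc i < length p \<longrightarrow> (\<exists>e\<in>E. ends e = {p ! i, p ! Suc i}))"

definition reachable :: "'v set \<Rightarrow> 'e set \<Rightarrow> ('e \<Rightarrow> 'v set) \<Rightarrow> 'v \<Rightarrow> 'v \<Rightarrow> bool" where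
  "reachable V E ends u v \<longleftrightarrow> (\<exists>p. is_path V E ends p \<and> hd p = u \<and> last p = v)"

definition components :: "'v set \<Rightarrow> 'e set \<Rightarrow> ('e \<Rightarrow> 'v set) \<Rightarrow> 'v set set" where
  "components V E ends = {{v \<in> V. reachable V E ends u v} | u. u \<in> V}"

end

theory Submission
  imports Defs
begin

definition adjrel :: "'v set \<Rightarrow> 'e set \<Rightarrow> ('e \<Rightarrow> 'v set) \<Rightarrow> ('v \<times> 'v) set" where
  "adjrel Vs F ends = {(a,b). a \<in> Vs \<and> b \<in> Vs \<and> (\<exists>e\<in>F. ends e = {a,b})}"

lemma adjrel_sym: "(a,b) \<in> adjrel Vs F ends \<Longrightarrow> (b,a) \<in> adjrel Vs F ends"
  by (auto simp: adjrel_def insert_commute)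

lemma rtr_sym: "(a,b) \<in> (adjrel Vs F ends)\<^sup>* \<Longrightarrow> (b,a) \<in> (adjrel Vs F ends)\<^sup>*"
proof (induction rule: rtrancl_induct)
  case base then show ?case by simp
next
  case (step y z) then show ?case
    by (meson adjrel_sym converse_rtrancl_into_rtrancl)
qed

lemma adjrel_mono: "Vs \<subseteq> Vs' \<Longrightarrow> F \<subseteq> F' \<Longrightarrow> adjrel Vs F ends \<subseteq> adjrel Vs' F' ends"
  by (auto simp: adjrel_def)

lemma rtr_mono: "(a,b) \<in> (adjrel Vs F ends)\<^sup>* \<Longrightarrow> Vs \<subseteq> Vs' \<Longrightarrow> F \<subseteq> F' \<Longrightarrow> (a,b) \<in> (adjrel Vs' F' ends)\<^sup>*"
  by (meson adjrel_mono rtrancl_mono subsetD)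

lemma rtr_in: "(a,b) \<in> (adjrel Vs F ends)\<^sup>* \<Longrightarrow> a \<in> Vs \<Longrightarrow> b \<in> Vs"
  by (induction rule: rtrancl_induct) (auto simp: adjrel_def)

lemma path_seg:
  assumes "is_path Vs F ends p" "i \<le> j" "j < length p"
  shows "(p!i, p!j) \<in> (adjrel Vs F ends)\<^sup>*"
  using assms(2,3)
proof (induction j)
  case 0 then show ?case by simp
next
  case (Suc j)
  show ?case
  proof (cases "i = Suc j")
    case True then show ?thesis by simp
  next
    case False
    then have "(p!i, p!j) \<in> (adjrel Vs F ends)\<^sup>*" using Suc by simp
    moreover have "(p!j, p!Suc j) \<in> adjrel Vs F ends"
      using assms(1) Suc.prems unfolding is_path_def adjrel_def
      by (auto simp: nth_mem subsetD)
    ultimately show ?thesis by simp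
  qed
qed

lemma path_conn:
  assumes "is_path Vs F ends p" "i < length p"
  shows "(hd p, p!i) \<in> (adjrel Vs F ends)\<^sup>*"
  using path_seg[OF assms(1) _ assms(2), of 0] assms(1)
  by (simp add: hd_conv_nth is_path_def)

lemma path_last:
  assumes "is_path Vs F ends p"
  shows "(hd p, last p) \<in> (adjrel Vs F ends)\<^sup>*"
  using path_conn[OF assms, of "length p - 1"] assms
  by (simp add: is_path_def last_conv_nth)

lemma path_set:
  assumes "is_path Vs F ends p" "v \<in> set p"
  shows "(hd p, v) \<in> (adjrel Vs F ends)\<^sup>*"
  using assms path_conn by (metis in_set_conv_nth)

lemma conn_path:
  assumes "(u,v) \<in> (adjrel Vs F ends)\<^sup>*" "u \<in> Vs"
  shows "\<exists>p. is_path Vs F ends p \<and> hd p = u \<and> last p = v"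
  using assms(1)
proof (induction rule: rtrancl_induct)
  case base
  then show ?case using assms(2) by (intro exI[of _ "[u]"]) (auto simp: is_path_def)
next
  case (step w v)
  then obtain p where p: "is_path Vs F ends p" "hd p = u" "last p = w" by blast
  show ?case
  proof (cases "v \<in> set p")
    case True
    then obtain j where j: "j < length p" "p!j = v" by (auto simp: in_set_conv_nth)
    let ?q = "take (Suc j) p"
    have "is_path Vs F ends ?q"
      using p(1) j unfolding is_path_def
      by (auto dest: in_set_takeD)
    moreover have "hd ?q = u" using p j by (simp add: is_path_def hd_conv_nth)
    moreover have "last ?q = v" using j by (simp add: take_Suc_conv_app_nth)
    ultimately show ?thesis by blast
  next
    case False
    let ?q = "p @ [v]"
    have pne: "p \<noteq> []" using p by (simp add: is_path_def)
    have "is_path Vs F ends ?q"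
      unfolding is_path_def
    proof (intro conjI allI impI)
      show "?q \<noteq> []" by simp
      show "distinct ?q" using p False by (simp add: is_path_def)
      show "set ?q \<subseteq> Vs" using p step.hyps(2) by (auto simp: is_path_def adjrel_def)
    next
      fix i assume i: "Suc i < length ?q"
      show "\<exists>e\<in>F. ends e = {?q ! i, ?q ! Suc i}"
      proof (cases "Suc i < length p")
        case True then show ?thesis using p(1) by (simp add: nth_append is_path_def)
      next
        case False
        then have "i = length p - 1" "Suc i = length p" using i by auto
        then show ?thesis using step.hyps(2) p(3) pne
          by (auto simp: nth_append adjrel_def last_conv_nth)
      qed
    qed
    moreover have "hd ?q = u" using p pne by simp
    moreover have "last ?q = v" by simp
    ultimately show ?thesis by blast
  qed
qed

lemma loop_cycle:
  assumes "e \<in> F" "e \<in> S" "ends e = {u}" "u \<in> Vs"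
  shows "is_S_cycle Vs F ends S [u] [e]"
  using assms by (auto simp: is_S_cycle_def is_cycle_def)

lemma cycle_from_conn:
  assumes eF: "e \<in> F" and eS: "e \<in> S" and eu: "ends e = {u,v}" and uv: "u \<noteq> v"
    and uV: "u \<in> Vs" and vV: "v \<in> Vs" and c: "(v,u) \<in> (adjrel Vs (F - {e}) ends)\<^sup>*"
  shows "\<exists>vs es. is_S_cycle Vs F ends S vs es"
proof -
  obtain p where p: "is_path Vs (F - {e}) ends p" "hd p = v" "last p = u"
    using conn_path[OF c vV] by blast
  define n where "n = length p"
  have pne: "p \<noteq> []" and dp: "distinct p" and pV: "set p \<subseteq> Vs"
    and ed: "\<And>i. Suc i < n \<Longrightarrow> \<exists>e'\<in>F - {e}. ends e' = {p!i, p!Suc i}"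
    using p(1) by (auto simp: is_path_def n_def)
  have n2: "n \<ge> 2"
  proof (rule ccontr)
    assume "\<not> n \<ge> 2"
    moreover have "n \<noteq> 0" using pne n_def by simp
    ultimately have "n = 1" by arith
    then have "hd p = last p" using pne n_def by (cases p) auto
    then show False using p uv by simp
  qed
  define f where "f i = (SOME e'. e' \<in> F - {e} \<and> ends e' = {p!i, p!Suc i})" for i
  have f: "f i \<in> F - {e} \<and> ends (f i) = {p!i, p!Suc i}" if "Suc i < n" for i
    unfolding f_def using someI_ex[OF ed[OF that, unfolded Bex_def]] by simp
  define es where "es = map f [0..<n-1] @ [e]"
  have les: "length es = n" using n2 by (simp add: es_def)
  have inj: "inj_on f {0..<n-1}"
  proof (rule inj_onI)
    fix i j assume i: "i \<in> {0..<n-1}" and j: "j \<in> {0..<n-1}" and fij: "f i = f j"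
    have "{p!i, p!Suc i} = {p!j, p!Suc j}" using f[of i] f[of j] i j fij by auto
    moreover have "p!i \<noteq> p!Suc j \<or> p!Suc i \<noteq> p!j \<or> i = j"
      using dp i j n_def by (auto simp: nth_eq_iff_index_eq)
    ultimately show "i = j" using dp i j n_def
      by (auto simp: doubleton_eq_iff nth_eq_iff_index_eq)
  qed
  have "is_cycle Vs F ends p es"
    unfolding is_cycle_def
  proof (intro conjI allI impI)
    show "p \<noteq> []" "length es = length p" "distinct p" "set p \<subseteq> Vs"
      using pne les dp pV n_def by auto
    have "e \<notin> f ` {0..<n-1}"
    proof
      assume "e \<in> f ` {0..<n-1}"
      then obtain x where "x < n - 1" "e = f x" by auto
      then show False using f[of x] by (metis Diff_iff insertI1 less_diff_conv Suc_eq_plus1)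
    qed
    then show "distinct es" using inj by (simp add: es_def distinct_map)
    show "set es \<subseteq> F" using f eF by (auto simp: es_def)
  next
    fix i assume i: "i < length p"
    show "ends (es ! i) = {p ! i, p ! ((i + 1) mod length p)}"
    proof (cases "i < n - 1")
      case True
      then show ?thesis using f[of i] n2 by (simp add: es_def nth_append n_def)
    next
      case False
      then have "i = n - 1" using i n_def by auto
      moreover have "p!(n-1) = u" using p(3) pne by (simp add: last_conv_nth n_def)
      moreover have "p!0 = v" using p(2) pne by (simp add: hd_conv_nth)
      moreover have "(n - 1 + 1) mod n = 0" using n2 by simp
      ultimately show ?thesis using eu n2 by (simp add: es_def nth_append n_def insert_commute)
    qed
  qed
  moreover have "set es \<inter> S \<noteq> {}" using eS by (auto simp: es_def)
  ultimately show ?thesis unfolding is_S_cycle_def by blast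
qed

lemma cycle_bridge:
  assumes "is_S_cycle Vs F ends S vs es"
  shows "\<exists>e\<in>set es \<inter> S. (\<exists>u. ends e = {u} \<and> u \<in> Vs) \<or>
    (\<exists>u v. ends e = {u,v} \<and> u \<noteq> v \<and> u \<in> Vs \<and> v \<in> Vs \<and> (v,u) \<in> (adjrel Vs (set es - {e}) ends)\<^sup>*)"
proof -
  define n where "n = length vs"
  have cyc: "vs \<noteq> []" "length es = n" "distinct vs" "distinct es" "set vs \<subseteq> Vs"
    "\<And>i. i < n \<Longrightarrow> ends (es ! i) = {vs ! i, vs ! ((i + 1) mod n)}"
    using assms by (auto simp: is_S_cycle_def is_cycle_def n_def)
  obtain i where i: "i < n" "es!i \<in> S"
    using assms cyc(2) by (auto simp: is_S_cycle_def in_set_conv_nth)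
  have n0: "n > 0" using cyc(1) n_def by simp
  have esi: "es!i \<in> set es" using i cyc(2) by simp
  show ?thesis
  proof (cases "n = 1")
    case True
    then have "ends (es!i) = {vs!0}" using cyc(6)[OF i(1)] i by simp
    moreover have "vs!0 \<in> Vs" using cyc n0 n_def by auto
    ultimately show ?thesis using esi i by blast
  next
    case False
    then have n2: "n \<ge> 2" using n0 by simp
    define u where "u = vs!i"
    define v where "v = vs!((i+1) mod n)"
    have uV: "u \<in> Vs" using cyc i n_def by (auto simp: u_def)
    have vV: "v \<in> Vs" using cyc n0 n_def by (auto simp: v_def)
    have "i \<noteq> (i+1) mod n"
    proof (cases "i+1 < n")
      case True then show ?thesis by simp
    next
      case False
      then have "i + 1 = n" using i by simp
      then show ?thesis using n2 by simp
    qed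
    then have uv: "u \<noteq> v" using cyc(3) i n0 n_def by (simp add: u_def v_def nth_eq_iff_index_eq)
    have walk: "(v, vs!((i+1+m) mod n)) \<in> (adjrel Vs (set es - {es!i}) ends)\<^sup>*" if "m < n" for m
      using that
    proof (induction m)
      case 0 then show ?case by (simp add: v_def)
    next
      case (Suc m)
      define j where "j = (i+1+m) mod n"
      have jn: "j < n" using n0 by (simp add: j_def)
      have ji: "j \<noteq> i"
      proof
        assume "j = i"
        show False
        proof (cases "i+1+m < n")
          case True then show False using \<open>j = i\<close> by (simp add: j_def)
        next
          case False
          then have "j = (i+1+m - n) mod n" by (simp add: j_def le_mod_geq)
          also have "\<dots> = i+1+m-n" using i Suc.prems by simp
          finally show False using \<open>j = i\<close> Suc.prems False by simp
        qed
      qed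
      have "es!j \<noteq> es!i" using ji jn i cyc(2,4) by (simp add: nth_eq_iff_index_eq)
      moreover have "es!j \<in> set es" using jn cyc(2) by simp
      moreover have "ends (es!j) = {vs!j, vs!((i+1+Suc m) mod n)}"
        using cyc(6)[OF jn] by (simp add: j_def mod_Suc_eq)
      moreover have "vs!j \<in> Vs" "vs!((i+1+Suc m) mod n) \<in> Vs" using cyc jn n0 n_def by auto
      ultimately have "(vs!j, vs!((i+1+Suc m) mod n)) \<in> adjrel Vs (set es - {es!i}) ends"
        by (auto simp: adjrel_def)
      with Suc show ?case by (simp add: j_def)
    qed
    have "(i+1+(n-1)) mod n = i" using i n0 by simp
    then have "(v,u) \<in> (adjrel Vs (set es - {es!i}) ends)\<^sup>*"
      using walk[of "n-1"] n0 by (simp add: u_def)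
    moreover have "ends (es!i) = {u,v}" using cyc(6)[OF i(1)] by (simp add: u_def v_def)
    ultimately show ?thesis using esi i uv uV vV by blast
  qed
qed

lemma adjrel_del: "adjrel (V - Y) F ends \<subseteq> adjrel (V - Y) (del_verts_E F ends Y) ends"
  by (auto simp: adjrel_def del_verts_E_def)

lemma exit_lemma:
  assumes "(a,b) \<in> r\<^sup>*" "a \<in> D" "b \<notin> D"
  shows "\<exists>w w'. w \<in> D \<and> (w,w') \<in> r \<and> w' \<notin> D \<and> (w',b) \<in> (r \<inter> (-D) \<times> (-D))\<^sup>*"
proof -
  have "b \<in> D \<or> (\<exists>w w'. w \<in> D \<and> (w,w') \<in> r \<and> w' \<notin> D \<and> (w',b) \<in> (r \<inter> (-D) \<times> (-D))\<^sup>*)"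
    using assms(1)
  proof (induction rule: rtrancl_induct)
    case base then show ?case using assms(2) by simp
  next
    case (step y z)
    show ?case
    proof (cases "z \<in> D")
      case True then show ?thesis by simp
    next
      case False
      show ?thesis
      proof (cases "y \<in> D")
        case True then show ?thesis using False step.hyps(2) by blast
      next
        case yD: False
        then obtain w w' where "w \<in> D" "(w,w') \<in> r" "w' \<notin> D" "(w',y) \<in> (r \<inter> (-D) \<times> (-D))\<^sup>*"
          using step.IH by blast
        moreover have "(y,z) \<in> r \<inter> (-D) \<times> (-D)" using yD False step.hyps(2) by simp
        ultimately show ?thesis by (meson rtrancl.rtrancl_into_rtrancl)
      qed
    qed
  qed
  then show ?thesis using assms(3) by blast
qed

lemma zdecomp:
  assumes "(v,u) \<in> (adjrel Vs F ends)\<^sup>*" "v \<notin> Z" "u \<notin> Z"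
  shows "(v,u) \<in> (adjrel (Vs - Z) F ends)\<^sup>* \<or>
    (\<exists>a b z1 z2. z1 \<in> Z \<and> z2 \<in> Z \<and> a \<notin> Z \<and> b \<notin> Z \<and>
       (a,z1) \<in> adjrel Vs F ends \<and> (b,z2) \<in> adjrel Vs F ends \<and>
       (v,a) \<in> (adjrel (Vs - Z) F ends)\<^sup>* \<and> (b,u) \<in> (adjrel (Vs - Z) F ends)\<^sup>*)"
proof -
  let ?R = "adjrel Vs F ends" and ?R' = "adjrel (Vs - Z) F ends"
  have "(u \<notin> Z \<and> (v,u) \<in> ?R'\<^sup>*) \<or>
    ((\<exists>a z1. z1 \<in> Z \<and> a \<notin> Z \<and> (a,z1) \<in> ?R \<and> (v,a) \<in> ?R'\<^sup>*) \<and>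
     (u \<in> Z \<or> (\<exists>b z2. z2 \<in> Z \<and> b \<notin> Z \<and> (b,z2) \<in> ?R \<and> (b,u) \<in> ?R'\<^sup>*)))"
    using assms(1)
  proof (induction rule: rtrancl_induct)
    case base then show ?case using assms(2) by simp
  next
    case (step y z)
    have yz: "(y,z) \<in> ?R" by fact
    have zy: "(z,y) \<in> ?R" using yz adjrel_sym by metis
    show ?case
    proof (cases "z \<in> Z")
      case True
      then show ?thesis using step.IH yz by blast
    next
      case zZ: False
      show ?thesis
      proof (cases "y \<in> Z")
        case True
        then have "(\<exists>a z1. z1 \<in> Z \<and> a \<notin> Z \<and> (a,z1) \<in> ?R \<and> (v,a) \<in> ?R'\<^sup>*)" using step.IH by blast
        moreover have "(z,z) \<in> ?R'\<^sup>*" by simp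
        ultimately show ?thesis using zZ True zy by blast
      next
        case yZ: False
        have "(y,z) \<in> ?R'" using yz yZ zZ by (auto simp: adjrel_def)
        then show ?thesis using step.IH yZ zZ
          by (meson rtrancl.rtrancl_into_rtrancl)
      qed
    qed
  qed
  then show ?thesis using assms(3) by blast
qed

locale esf =
  fixes V :: "'v set" and E :: "'e set" and ends :: "'e \<Rightarrow> 'v set" and S :: "'e set" and X :: "'v set"
  assumes G: "multigraph V E ends" and SE: "S \<subseteq> E" and XV: "X \<subseteq> V"
    and nocyc: "\<not> (\<exists>vs es. is_S_cycle (V - X) (del_verts_E E ends X) ends S vs es)"
begin

definition "T = verts_of ends S"
definition "A0 = adjrel (V - X) (E - S) ends"
definition "cls u = {v. (u,v) \<in> A0\<^sup>*}"

lemma ends_V: "e \<in> E \<Longrightarrow> ends e \<subseteq> V"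
  using G by (auto simp: multigraph_def)
lemma finV: "finite V" using G by (simp add: multigraph_def)

lemma bridge:
  assumes "e \<in> E" "e \<in> S" "ends e = {u,v}" "u \<noteq> v" "u \<notin> X" "v \<notin> X"
    and c: "(v,u) \<in> (adjrel (V - X) (E - {e}) ends)\<^sup>*"
  shows False
proof -
  have uv: "u \<in> V" "v \<in> V" using ends_V[OF assms(1)] assms(3) by auto
  have "(v,u) \<in> (adjrel (V - X) (del_verts_E (E - {e}) ends X) ends)\<^sup>*"
    using rtrancl_mono[OF adjrel_del] c by blast
  moreover have "del_verts_E (E - {e}) ends X = del_verts_E E ends X - {e}"
    by (auto simp: del_verts_E_def)
  moreover have "e \<in> del_verts_E E ends X" using assms by (auto simp: del_verts_E_def)
  ultimately have "(v,u) \<in> (adjrel (V - X) (del_verts_E E ends X - {e}) ends)\<^sup>*" "e \<in> del_verts_E E ends X"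
    by simp_all
  from cycle_from_conn[OF this(2) assms(2,3,4) _ _ this(1)] uv assms(5,6)
  have "\<exists>vs es. is_S_cycle (V - X) (del_verts_E E ends X) ends S vs es" by blast
  then show False using nocyc by blast
qed

lemma noloop:
  assumes "e \<in> E" "e \<in> S" "ends e = {u}" "u \<notin> X"
  shows False
proof -
  have "u \<in> V" using ends_V[OF assms(1)] assms(3) by auto
  moreover have "e \<in> del_verts_E E ends X" using assms by (auto simp: del_verts_E_def)
  ultimately have "is_S_cycle (V - X) (del_verts_E E ends X) ends S [u] [e]"
    using loop_cycle[of e "del_verts_E E ends X" S ends u "V - X"] assms by blast
  then show False using nocyc by blast
qed

lemma A0_sym: "(a,b) \<in> A0\<^sup>* \<Longrightarrow> (b,a) \<in> A0\<^sup>*"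
  unfolding A0_def by (rule rtr_sym)

lemma cls_self: "u \<in> cls u" by (simp add: cls_def)

lemma cls_sub: "u \<in> V - X \<Longrightarrow> cls u \<subseteq> V - X"
proof
  fix v assume "u \<in> V - X" "v \<in> cls u"
  then show "v \<in> V - X" unfolding cls_def A0_def using rtr_in[of u v "V - X" "E - S" ends] by simp
qed

lemma cls_conn: "a \<in> cls u \<Longrightarrow> b \<in> cls u \<Longrightarrow> (a,b) \<in> A0\<^sup>*"
proof -
  assume "a \<in> cls u" "b \<in> cls u"
  then have "(a,u) \<in> A0\<^sup>*" "(u,b) \<in> A0\<^sup>*" using A0_sym by (auto simp: cls_def)
  then show ?thesis by (rule rtrancl_trans)
qed

lemma cls_eq: "v \<in> cls u \<Longrightarrow> cls v = cls u"
proof -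
  assume "v \<in> cls u"
  then have uv: "(u,v) \<in> A0\<^sup>*" "(v,u) \<in> A0\<^sup>*" using A0_sym by (auto simp: cls_def)
  show ?thesis
  proof
    show "cls v \<subseteq> cls u" using uv(1) rtrancl_trans[where r=A0 and x=u and y=v] by (auto simp: cls_def)
    show "cls u \<subseteq> cls v" using uv(2) rtrancl_trans[where r=A0 and x=v and y=u] by (auto simp: cls_def)
  qed
qed

lemma cls_disj: "cls u \<inter> cls w \<noteq> {} \<Longrightarrow> cls u = cls w"
proof -
  assume "cls u \<inter> cls w \<noteq> {}"
  then obtain v where "v \<in> cls u" "v \<in> cls w" by auto
  then show ?thesis using cls_eq by metis
qed

lemma A0_sub: "e \<in> S \<Longrightarrow> A0 \<subseteq> adjrel (V - X) (E - {e}) ends"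
  unfolding A0_def by (rule adjrel_mono) auto

lemma escape:
  assumes "(a,b) \<in> (adjrel Vs E ends)\<^sup>*" "Vs \<subseteq> V - X" "(a,b) \<notin> A0\<^sup>*"
  shows "\<exists>t\<in>T. t \<in> cls a"
proof -
  have "(a,b) \<in> A0\<^sup>* \<or> (\<exists>t\<in>T. t \<in> cls a)"
    using assms(1)
  proof (induction rule: rtrancl_induct)
    case base then show ?case by simp
  next
    case (step y z)
    show ?case
    proof (cases "(a,y) \<in> A0\<^sup>*")
      case True
      obtain e where e: "e \<in> E" "ends e = {y,z}" "y \<in> Vs" "z \<in> Vs" using step.hyps(2) by (auto simp: adjrel_def)
      show ?thesis
      proof (cases "e \<in> S")
        case True
        then have "y \<in> T" using e by (auto simp: T_def verts_of_def)
        then show ?thesis using \<open>(a,y) \<in> A0\<^sup>*\<close> by (auto simp: cls_def)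
      next
        case False
        then have "(y,z) \<in> A0" using e assms(2) by (auto simp: A0_def adjrel_def)
        then show ?thesis using True by (meson rtrancl.rtrancl_into_rtrancl)
      qed
    next
      case False then show ?thesis using step.IH by blast
    qed
  qed
  then show ?thesis using assms(3) by blast
qed

lemma within_cls:
  assumes "(a,a') \<in> A0\<^sup>*" "cls a \<inter> R = {}"
  shows "(a,a') \<in> (adjrel (V - X - R) (E - S) ends)\<^sup>*"
  using assms(1)
proof (induction rule: rtrancl_induct)
  case base then show ?case by simp
next
  case (step y z)
  have "z \<in> cls a" "y \<in> cls a" using step.hyps by (auto simp: cls_def)
  then have "y \<notin> R" "z \<notin> R" using assms(2) by auto
  then have "(y,z) \<in> adjrel (V - X - R) (E - S) ends" using step.hyps(2) by (auto simp: A0_def adjrel_def)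
  then show ?case using step.IH by (meson rtrancl.rtrancl_into_rtrancl)
qed

end

context esf begin

definition "A1R R = adjrel (V - X - R) E ends"
definition "sepd M R \<longleftrightarrow> (\<forall>K\<in>M. \<forall>K'\<in>M. K \<noteq> K' \<longrightarrow> (\<forall>a\<in>K. \<forall>b\<in>K'. a \<notin> R \<longrightarrow> (a,b) \<notin> (A1R R)\<^sup>*))"

lemma A1R_mono:
  assumes "R' \<subseteq> R" "(a,b) \<in> (A1R R)\<^sup>*" shows "(a,b) \<in> (A1R R')\<^sup>*"
proof -
  have "V - X - R \<subseteq> V - X - R'" using assms(1) by blast
  from rtr_mono[OF assms(2)[unfolded A1R_def] this subset_refl] show ?thesis unfolding A1R_def .
qed

lemma cls_disj2: "D = cls d \<Longrightarrow> K = cls k \<Longrightarrow> D \<noteq> K \<Longrightarrow> D \<inter> K = {}"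
  using cls_disj by blast

lemma sep_step:
  assumes M': "M' \<subseteq> cls ` (V - X)" and D: "D \<in> cls ` (V - X)" "D \<notin> M'"
    and R'T: "R' \<subseteq> \<Union>M'" and IH: "sepd M' R'"
    and a: "a \<in> D" and D1: "D1 \<in> M'" and b: "b \<in> D1" and ab: "(a,b) \<in> (A1R R')\<^sup>*"
  obtains w where "w \<in> D" "w \<in> T"
    "\<And>a' K' b'. a' \<in> D \<Longrightarrow> K' \<in> M' \<Longrightarrow> b' \<in> K' \<Longrightarrow> a' \<notin> insert w R' \<Longrightarrow>
        (a',b') \<notin> (A1R (insert w R'))\<^sup>*"
proof -
  obtain d where d: "d \<in> V - X" "D = cls d" using D by auto
  have DV: "D \<subseteq> V - X" using d cls_sub by simp
  have disj: "D \<inter> K = {}" if "K \<in> M'" for K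
    using M' that D(2) cls_disj2[OF d(2)] by blast
  have DR': "D \<inter> R' = {}" using disj R'T by blast
  have bD: "b \<notin> D" using disj D1 b by blast
  obtain w w' where ww: "w \<in> D" "(w,w') \<in> A1R R'" "w' \<notin> D"
      "(w',b) \<in> (A1R R' \<inter> (-D) \<times> (-D))\<^sup>*"
    using exit_lemma[OF ab a bD] by blast
  obtain f where f: "f \<in> E" "ends f = {w,w'}" "w \<in> V - X - R'" "w' \<in> V - X - R'"
    using ww(2) by (auto simp: A1R_def adjrel_def)
  have clsw: "cls w = D" using ww(1) d cls_eq by simp
  have fS: "f \<in> S"
  proof (rule ccontr)
    assume "f \<notin> S"
    then have "(w,w') \<in> A0" using f by (auto simp: A0_def adjrel_def)
    then have "w' \<in> cls w" by (auto simp: cls_def)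
    then show False using clsw ww(3) by simp
  qed
  have wT: "w \<in> T" using fS f by (auto simp: T_def verts_of_def)
  have ww': "w \<noteq> w'" using ww by auto
  show ?thesis
  proof (rule that[OF ww(1) wT])
    fix a' K' b' assume a': "a' \<in> D" and K': "K' \<in> M'" and b': "b' \<in> K'"
      and a'R: "a' \<notin> insert w R'"
    show "(a',b') \<notin> (A1R (insert w R'))\<^sup>*"
    proof
    assume ab': "(a',b') \<in> (A1R (insert w R'))\<^sup>*"
    have ab'R': "(a',b') \<in> (A1R R')\<^sup>*" using A1R_mono[OF subset_insertI ab'] .
    show False
    proof (cases "K' = D1")
      case False
      have "(b,a) \<in> (A1R R')\<^sup>*" using ab unfolding A1R_def by (rule rtr_sym)
      moreover have "(a,a') \<in> (A1R R')\<^sup>*"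
      proof -
        have "(a,a') \<in> A0\<^sup>*" using a a' d cls_conn by simp
        moreover have "cls a \<inter> R' = {}" using a d cls_eq DR' by simp
        ultimately have "(a,a') \<in> (adjrel (V - X - R') (E - S) ends)\<^sup>*" by (rule within_cls)
        then show ?thesis unfolding A1R_def by (rule rtr_mono) auto
      qed
      ultimately have "(b,b') \<in> (A1R R')\<^sup>*" using ab'R' rtrancl_trans by metis
      moreover have "b \<notin> R'"
        using rtr_in[of a b "V - X - R'" E ends] ab a DV DR' by (auto simp: A1R_def)
      ultimately show False using IH D1 K' b b' False unfolding sepd_def by blast
    next
      case True
      let ?H = "adjrel (V - X) (E - {f}) ends"
      have sub1: "A1R R' \<inter> (-D) \<times> (-D) \<subseteq> ?H"
        proof
          fix p assume "p \<in> A1R R' \<inter> (-D) \<times> (-D)"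
          then obtain y z e' where "p = (y,z)" "y \<notin> D" "z \<notin> D" "e' \<in> E" "ends e' = {y,z}"
            "y \<in> V - X" "z \<in> V - X" by (auto simp: A1R_def adjrel_def)
          moreover have "e' \<noteq> f" using calculation f(2) ww(1) by auto
          ultimately show "p \<in> ?H" by (auto simp: adjrel_def)
        qed
      have c1: "(w',b) \<in> ?H\<^sup>*" using subsetD[OF rtrancl_mono[OF sub1] ww(4)] .
      have c2: "(b,b') \<in> ?H\<^sup>*"
      proof -
        obtain k where "K' = cls k" using M' K' by auto
        then have "(b,b') \<in> A0\<^sup>*" using True b b' cls_conn by simp
        then show ?thesis using subsetD[OF rtrancl_mono[OF A0_sub[OF fS]]] by simp
      qed
      have c3: "(b',a') \<in> ?H\<^sup>*"
      proof -
        have "(b',a') \<in> (A1R (insert w R'))\<^sup>*" using ab' unfolding A1R_def by (rule rtr_sym)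
        moreover have "A1R (insert w R') \<subseteq> ?H"
        proof
          fix p assume "p \<in> A1R (insert w R')"
          then obtain y z e' where "p = (y,z)" "e' \<in> E" "ends e' = {y,z}"
            "y \<in> V - X - insert w R'" "z \<in> V - X - insert w R'" by (auto simp: A1R_def adjrel_def)
          moreover have "e' \<noteq> f" using calculation f(2) by auto
          ultimately show "p \<in> ?H" by (auto simp: adjrel_def)
        qed
        ultimately show ?thesis using subsetD[OF rtrancl_mono] by metis
      qed
      have c4: "(a',w) \<in> ?H\<^sup>*"
      proof -
        have "(a',w) \<in> A0\<^sup>*" using a' ww(1) d cls_conn by simp
        then show ?thesis using subsetD[OF rtrancl_mono[OF A0_sub[OF fS]]] by simp
      qed
      have "(w',w) \<in> ?H\<^sup>*" using rtrancl_trans[OF rtrancl_trans[OF rtrancl_trans[OF c1 c2] c3] c4] .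
      then show False using bridge[OF f(1) fS f(2) ww'] f(3,4) by blast
    qed
  qed
qed
qed

end

context esf begin

lemma A1R_sym: "(a,b) \<in> (A1R R)\<^sup>* \<Longrightarrow> (b,a) \<in> (A1R R)\<^sup>*"
  unfolding A1R_def by (rule rtr_sym)

lemma A1R_in: "(a,b) \<in> (A1R R)\<^sup>* \<Longrightarrow> a \<in> V - X - R \<Longrightarrow> b \<in> V - X - R"
  unfolding A1R_def by (rule rtr_in)

lemma sep_exists:
  assumes "finite M" "M \<noteq> {}" "M \<subseteq> cls ` (V - X)"
  shows "\<exists>R. R \<subseteq> T \<inter> \<Union>M \<and> card R \<le> card M - 1 \<and> sepd M R"
  using assms
proof (induction M rule: finite_ne_induct)
  case (singleton D)
  show ?case by (rule exI[of _ "{}"]) (auto simp: sepd_def)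
next
  case (insert D M')
  from insert.prems have M'c: "M' \<subseteq> cls ` (V - X)" and Dc: "D \<in> cls ` (V - X)" by auto
  obtain R' where R': "R' \<subseteq> T \<inter> \<Union>M'" "card R' \<le> card M' - 1" "sepd M' R'"
    using insert.IH[OF M'c] by blast
  have UV: "\<Union>(insert D M') \<subseteq> V - X" using insert.prems cls_sub by blast
  have KV: "K \<subseteq> V - X" if "K \<in> insert D M'" for K using UV that by blast
  have finR': "finite R'" using R'(1) UV finV by (meson Diff_subset finite_subset le_infE subset_trans Union_mono subset_insertI)
  have cM': "card M' \<ge> 1" using insert.hyps(1,2) by (simp add: Suc_leI card_gt_0_iff)
  have cM: "card (insert D M') = Suc (card M')" using insert.hyps by simp
  show ?case
  proof (cases "\<exists>a\<in>D. \<exists>D1\<in>M'. \<exists>b\<in>D1. (a,b) \<in> (A1R R')\<^sup>*")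
    case True
    then obtain a D1 b where ab: "a \<in> D" "D1 \<in> M'" "b \<in> D1" "(a,b) \<in> (A1R R')\<^sup>*" by blast
    obtain w where w: "w \<in> D" "w \<in> T"
      and wsep: "\<And>a' K' b'. a' \<in> D \<Longrightarrow> K' \<in> M' \<Longrightarrow> b' \<in> K' \<Longrightarrow> a' \<notin> insert w R' \<Longrightarrow>
        (a',b') \<notin> (A1R (insert w R'))\<^sup>*"
      using sep_step[OF M'c Dc insert.hyps(3) _ R'(3) ab] R'(1) by blast
    let ?R = "insert w R'"
    have "?R \<subseteq> T \<inter> \<Union>(insert D M')" using w R'(1) by auto
    moreover have "card ?R \<le> card (insert D M') - 1"
      using finR' R'(2) cM cM' by (simp add: card_insert_if) linarith
    moreover have "sepd (insert D M') ?R"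
      unfolding sepd_def
    proof (intro ballI impI)
      fix K K' a b assume K: "K \<in> insert D M'" and K': "K' \<in> insert D M'" and KK: "K \<noteq> K'"
        and a: "a \<in> K" and b: "b \<in> K'" and aR: "a \<notin> ?R"
      show "(a,b) \<notin> (A1R ?R)\<^sup>*"
      proof
        assume abR: "(a,b) \<in> (A1R ?R)\<^sup>*"
        show False
        proof (cases "K = D")
          case True
          then have "K' \<in> M'" using K' KK by auto
          then show False using wsep[OF _ _ b aR] a True abR by blast
        next
          case KD: False
          then have KM: "K \<in> M'" using K by auto
          show False
          proof (cases "K' = D")
            case True
            have "a \<in> V - X - ?R" using a aR KV[OF K] by auto
            then have "b \<notin> ?R" using A1R_in[OF abR] by auto
            then show False using wsep[OF _ KM a] b True A1R_sym[OF abR] by blast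
          next
            case False
            then have "K' \<in> M'" using K' by auto
            moreover have "(a,b) \<in> (A1R R')\<^sup>*" using A1R_mono[OF subset_insertI abR] .
            ultimately show False using R'(3) KM KK a b aR unfolding sepd_def by blast
          qed
        qed
      qed
    qed
    ultimately show ?thesis by blast
  next
    case False
    have "R' \<subseteq> T \<inter> \<Union>(insert D M')" using R'(1) by auto
    moreover have "card R' \<le> card (insert D M') - 1" using R'(2) cM by simp
    moreover have "sepd (insert D M') R'"
      unfolding sepd_def
    proof (intro ballI impI)
      fix K K' a b assume K: "K \<in> insert D M'" and K': "K' \<in> insert D M'" and KK: "K \<noteq> K'"
        and a: "a \<in> K" and b: "b \<in> K'" and aR: "a \<notin> R'"
      show "(a,b) \<notin> (A1R R')\<^sup>*"
      proof
        assume abR: "(a,b) \<in> (A1R R')\<^sup>*"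
        show False
        proof (cases "K = D")
          case True
          then have "K' \<in> M'" using K' KK by auto
          then show False using False a b True abR by blast
        next
          case KD: False
          then have KM: "K \<in> M'" using K by auto
          show False
          proof (cases "K' = D")
            case True
            then show False using False KM a b A1R_sym[OF abR] by blast
          next
            case False
            then have "K' \<in> M'" using K' by auto
            then show False using R'(3) KM KK a b aR abR unfolding sepd_def by blast
          qed
        qed
      qed
    qed
    ultimately show ?thesis by blast
  qed
qed

end

context esf begin

definition "NZ Z = {K. \<exists>u\<in>V - X. K = cls u \<and> K \<inter> T \<noteq> {} \<and> (\<exists>z\<in>Z. \<exists>a\<in>K. \<exists>e\<in>E - S. ends e = {a,z})}"

lemma NZ_fin: "finite (NZ Z)"
proof -
  have "NZ Z \<subseteq> cls ` (V - X)" by (auto simp: NZ_def)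
  moreover have "finite (cls ` (V - X))" using finV by simp
  ultimately show ?thesis by (rule finite_subset)
qed

lemma newsol_nocyc:
  assumes Z: "Z \<subseteq> X" "Z \<inter> T = {}" and R: "R \<subseteq> V - X" and sep: "sepd (NZ Z) R"
  shows "\<not> (\<exists>vs es. is_S_cycle (V - ((X - Z) \<union> R)) (del_verts_E E ends ((X - Z) \<union> R)) ends S vs es)"
proof
  let ?X' = "(X - Z) \<union> R"
  assume "\<exists>vs es. is_S_cycle (V - ?X') (del_verts_E E ends ?X') ends S vs es"
  then obtain vs es where cyc: "is_S_cycle (V - ?X') (del_verts_E E ends ?X') ends S vs es" by blast
  have esE: "set es \<subseteq> del_verts_E E ends ?X'" using cyc by (auto simp: is_S_cycle_def is_cycle_def)
  obtain e where e: "e \<in> set es" "e \<in> S" and alt: "(\<exists>u. ends e = {u} \<and> u \<in> V - ?X') \<or>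
    (\<exists>u v. ends e = {u,v} \<and> u \<noteq> v \<and> u \<in> V - ?X' \<and> v \<in> V - ?X' \<and>
       (v,u) \<in> (adjrel (V - ?X') (set es - {e}) ends)\<^sup>*)"
    using cycle_bridge[OF cyc] by blast
  have eE: "e \<in> E" and eX': "ends e \<inter> ?X' = {}" using e(1) esE by (auto simp: del_verts_E_def)
  have eT: "ends e \<subseteq> T" using e(2) by (auto simp: T_def verts_of_def)
  have eX: "ends e \<inter> X = {}" using eX' eT Z by blast
  have eR: "ends e \<inter> R = {}" using eX' by blast
  have eZ: "ends e \<inter> Z = {}" using eT Z by blast
  have VV: "V - ?X' - Z = V - X - R" using Z R by blast
  show False
  proof (cases "\<exists>u. ends e = {u} \<and> u \<in> V - ?X'")
    case True
    then obtain u where "ends e = {u}" by blast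
    then show False using noloop[OF eE e(2)] eX by blast
  next
    case False
    then obtain u v where uv: "ends e = {u,v}" "u \<noteq> v" "u \<in> V - ?X'" "v \<in> V - ?X'"
      and c0: "(v,u) \<in> (adjrel (V - ?X') (set es - {e}) ends)\<^sup>*" using alt by blast
    have c: "(v,u) \<in> (adjrel (V - ?X') (E - {e}) ends)\<^sup>*"
    proof (rule rtr_mono[OF c0 subset_refl])
      show "set es - {e} \<subseteq> E - {e}" using esE by (auto simp: del_verts_E_def)
    qed
    have uZ: "u \<notin> Z" "v \<notin> Z" "u \<notin> X" "v \<notin> X" "u \<notin> R" "v \<notin> R" using uv(1) eZ eX eR by auto
    let ?H = "adjrel (V - X) (E - {e}) ends"
    let ?H' = "adjrel (V - ?X' - Z) (E - {e}) ends"
    have vs1: "V - ?X' - Z \<subseteq> V - X" and vs2: "V - ?X' - Z \<subseteq> V - X - R" using VV by auto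
    have H'H: "(x,y) \<in> ?H'\<^sup>* \<Longrightarrow> (x,y) \<in> ?H\<^sup>*" for x y
      using rtr_mono[OF _ vs1 subset_refl] by blast
    have H'A: "(x,y) \<in> ?H'\<^sup>* \<Longrightarrow> (x,y) \<in> (A1R R)\<^sup>*" for x y
      unfolding A1R_def using rtr_mono[OF _ vs2 Diff_subset] by blast
    from zdecomp[OF c uZ(2) uZ(1)]
    show False
    proof
      assume "(v,u) \<in> ?H'\<^sup>*"
      then show False using bridge[OF eE e(2) uv(1,2) uZ(3,4)] H'H by blast
    next
      assume "\<exists>a b z1 z2. z1 \<in> Z \<and> z2 \<in> Z \<and> a \<notin> Z \<and> b \<notin> Z \<and>
       (a,z1) \<in> adjrel (V - ?X') (E - {e}) ends \<and> (b,z2) \<in> adjrel (V - ?X') (E - {e}) ends \<and>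
       (v,a) \<in> ?H'\<^sup>* \<and> (b,u) \<in> ?H'\<^sup>*"
      then obtain a b z1 z2 where ab: "z1 \<in> Z" "z2 \<in> Z" "a \<notin> Z" "b \<notin> Z"
        "(a,z1) \<in> adjrel (V - ?X') (E - {e}) ends" "(b,z2) \<in> adjrel (V - ?X') (E - {e}) ends"
        "(v,a) \<in> ?H'\<^sup>*" "(b,u) \<in> ?H'\<^sup>*" by blast
      have aV: "a \<in> V - X - R" "b \<in> V - X - R" using ab(3-6) VV by (auto simp: adjrel_def)
      show False
      proof (cases "(a,b) \<in> A0\<^sup>*")
        case True
        have "(a,b) \<in> ?H\<^sup>*" using subsetD[OF rtrancl_mono[OF A0_sub[OF e(2)]] True] .
        then have "(v,u) \<in> ?H\<^sup>*" using rtrancl_trans[OF rtrancl_trans[OF H'H[OF ab(7)]] H'H[OF ab(8)]] by blast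
        then show False using bridge[OF eE e(2) uv(1,2) uZ(3,4)] by blast
      next
        case False
        have "(v,u) \<in> A1R R" using eE uv uZ by (auto simp: A1R_def adjrel_def insert_commute)
        then have "(a,b) \<in> (A1R R)\<^sup>*"
          using rtrancl_trans[OF rtrancl_into_rtrancl[OF A1R_sym[OF H'A[OF ab(7)]] \<open>(v,u) \<in> A1R R\<close>] A1R_sym[OF H'A[OF ab(8)]]] by simp
        note abA = this
        have "(b,a) \<notin> A0\<^sup>*" using False A0_sym by blast
        have RV: "V - X - R \<subseteq> V - X" by blast
        obtain t where t: "t \<in> T" "t \<in> cls a" using escape[OF abA[unfolded A1R_def] RV False] by blast
        have clsa: "cls a \<in> NZ Z"
        proof -
          obtain e' where e': "e' \<in> E - {e}" "ends e' = {a,z1}" using ab(5) by (auto simp: adjrel_def)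
          have "e' \<notin> S" using e' ab(1) Z(2) by (auto simp: T_def verts_of_def)
          then show ?thesis unfolding NZ_def using aV t e' ab(1) cls_self by blast
        qed
        have clsb: "cls b \<in> NZ Z"
        proof -
          obtain t' where t': "t' \<in> T" "t' \<in> cls b"
            using escape[OF A1R_sym[OF abA, unfolded A1R_def] RV \<open>(b,a) \<notin> A0\<^sup>*\<close>] by blast
          obtain e' where e': "e' \<in> E - {e}" "ends e' = {b,z2}" using ab(6) by (auto simp: adjrel_def)
          have "e' \<notin> S" using e' ab(2) Z(2) by (auto simp: T_def verts_of_def)
          then show ?thesis unfolding NZ_def using aV t' e' ab(2) cls_self by blast
        qed
        have "cls a \<noteq> cls b" using False cls_self[of b] by (auto simp: cls_def)
        then show False using sep clsa clsb cls_self aV abA unfolding sepd_def by blast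
      qed
    qed
  qed
qed

end

context esf begin

lemma hall_cond:
  assumes dom: "dominant_solution V E ends S k X" and Z: "Z \<subseteq> X - T" "Z \<noteq> {}"
  shows "card Z + 2 \<le> card (NZ Z)"
proof (rule ccontr)
  assume "\<not> card Z + 2 \<le> card (NZ Z)"
  then have cN: "card (NZ Z) \<le> card Z + 1" by simp
  have NZc: "NZ Z \<subseteq> cls ` (V - X)" by (auto simp: NZ_def)
  obtain R where R: "R \<subseteq> T \<inter> \<Union>(NZ Z)" "card R \<le> card (NZ Z) - 1" "sepd (NZ Z) R"
  proof (cases "NZ Z = {}")
    case True
    then show ?thesis using that[of "{}"] by (simp add: sepd_def)
  next
    case False
    then show ?thesis using that sep_exists[OF NZ_fin False NZc] by blast
  qed
  have UV: "\<Union>(NZ Z) \<subseteq> V - X" using NZc cls_sub by blast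
  have RV: "R \<subseteq> V - X" using R(1) UV by blast
  have finX: "finite X" using XV finV finite_subset by blast
  have finZ: "finite Z" using Z(1) finX finite_subset by blast
  have finR: "finite R" using RV finV finite_subset by blast
  have ZX: "Z \<subseteq> X" "Z \<inter> T = {}" using Z(1) by auto
  have cZ: "card Z \<ge> 1" using finZ Z(2) by (simp add: Suc_leI card_gt_0_iff)
  have cR: "card R \<le> card Z" using R(2) cN by linarith
  let ?X' = "(X - Z) \<union> R"
  have cX': "card ?X' = card X - card Z + card R"
  proof -
    have "card ?X' = card (X - Z) + card R"
      using finX finR RV by (intro card_Un_disjoint) auto
    moreover have "card (X - Z) = card X - card Z" using ZX(1) finZ by (simp add: card_Diff_subset)
    ultimately show ?thesis by simp
  qed
  have cZX: "card Z \<le> card X" using ZX(1) finX card_mono by blast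
  have sol: "esfvs_solution V E ends S k ?X'"
    unfolding esfvs_solution_def
  proof (intro conjI)
    show "?X' \<subseteq> V" using XV RV by blast
    show "card ?X' \<le> k" using cX' cR cZX dom by (auto simp: dominant_solution_def esfvs_solution_def)
    show "\<not> (\<exists>vs es. is_S_cycle (V - ?X') (del_verts_E E ends ?X') ends S vs es)"
      by (rule newsol_nocyc[OF ZX RV R(3)])
  qed
  have "card X \<le> card ?X'" using dom sol by (auto simp: dominant_solution_def)
  then have eq: "card R = card Z" using cX' cR cZX by linarith
  then have "card ?X' = card X" using cX' cZX by simp
  then have le: "card (?X' \<inter> T) \<le> card (X \<inter> T)"
    using dom sol unfolding dominant_solution_def T_def by blast
  have "?X' \<inter> T = (X \<inter> T) \<union> R" using ZX R(1) by blast
  moreover have "card ((X \<inter> T) \<union> R) = card (X \<inter> T) + card R"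
    using finX finR RV by (intro card_Un_disjoint) auto
  ultimately show False using le eq cZ by simp
qed

end

lemma hall:
  fixes A :: "'i \<Rightarrow> 'a set"
  assumes "finite I" "\<forall>i\<in>I. finite (A i)" "\<forall>J\<subseteq>I. card J \<le> card (\<Union>(A ` J))"
  shows "\<exists>f. (\<forall>i\<in>I. f i \<in> A i) \<and> inj_on f I"
  using assms
proof (induction "card I" arbitrary: I A rule: less_induct)
  case less
  note fin = less.prems(1) and finA = less.prems(2) and hc = less.prems(3)
  have finU: "finite (\<Union>(A ` J))" if "J \<subseteq> I" for J
  proof (rule finite_UN_I)
    show "finite J" using that fin finite_subset by blast
    show "\<And>a. a \<in> J \<Longrightarrow> finite (A a)" using that finA by blast
  qed
  show ?case
  proof (cases "I = {}")
    case True then show ?thesis by simp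
  next
    case Ine: False
    show ?thesis
    proof (cases "\<forall>J. J \<subseteq> I \<and> J \<noteq> {} \<and> J \<noteq> I \<longrightarrow> card J < card (\<Union>(A ` J))")
      case True
      obtain i0 where i0: "i0 \<in> I" using Ine by blast
      have "{i0} \<subseteq> I" using i0 by simp
      then have "card {i0} \<le> card (\<Union>(A ` {i0}))" using hc by blast
      then have "card {i0} \<le> card (A i0)" by simp
      then have "A i0 \<noteq> {}" by auto
      then obtain a where a: "a \<in> A i0" by blast
      let ?I = "I - {i0}" and ?A = "\<lambda>i. A i - {a}"
      have "card I > 0" using fin i0 card_gt_0_iff by blast
      then have h1: "card ?I < card I" using fin i0 by simp
      have h2: "finite ?I" using fin by simp
      have h3: "\<forall>i\<in>?I. finite (?A i)" using finA by simp
      have h4: "\<forall>J\<subseteq>?I. card J \<le> card (\<Union>(?A ` J))"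
      proof (intro allI impI)
        fix J assume J: "J \<subseteq> ?I"
        show "card J \<le> card (\<Union>(?A ` J))"
        proof (cases "J = {}")
          case True then show ?thesis by simp
        next
          case False
          have JI: "J \<subseteq> I" "J \<noteq> I" using J i0 by auto
          then have c1: "card J < card (\<Union>(A ` J))" using True[rule_format, of J] False by blast
          have e1: "\<Union>(?A ` J) = \<Union>(A ` J) - {a}" by blast
          have c2: "card (\<Union>(A ` J) - {a}) \<ge> card (\<Union>(A ` J)) - 1"
            using finU[OF JI(1)] by (simp add: card_Diff_singleton_if)
          have "card (\<Union>(?A ` J)) \<ge> card (\<Union>(A ` J)) - 1" using c2 unfolding e1 .
          then show ?thesis using c1 by linarith
        qed
      qed
      obtain f where f: "\<forall>i\<in>?I. f i \<in> ?A i" "inj_on f ?I"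
        using less.hyps[OF h1 h2 h3 h4] by blast
      let ?f = "f(i0 := a)"
      have fa: "f i \<noteq> a" "f i \<in> A i" if "i \<in> I" "i \<noteq> i0" for i
        using f(1) that by auto
      have "\<forall>i\<in>I. ?f i \<in> A i"
      proof
        fix i assume "i \<in> I" then show "?f i \<in> A i" using fa a by (cases "i = i0") auto
      qed
      moreover have "inj_on ?f I"
      proof (rule inj_onI)
        fix x y assume x: "x \<in> I" and y: "y \<in> I" and e: "?f x = ?f y"
        show "x = y"
        proof (cases "x = i0"; cases "y = i0")
          assume "x \<noteq> i0" "y \<noteq> i0"
          then show ?thesis using e f(2) x y unfolding inj_on_def by simp
        next
          assume "x = i0" "y \<noteq> i0" then show ?thesis using e fa[OF y] by simp
        next
          assume "x \<noteq> i0" "y = i0" then show ?thesis using e fa[OF x] by simp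
        qed simp
      qed
      ultimately show ?thesis by blast
    next
      case False
      then obtain J where J0: "J \<subseteq> I" "J \<noteq> {}" "J \<noteq> I" "\<not> card J < card (\<Union>(A ` J))" by blast
      then have J: "J \<subseteq> I" "J \<noteq> {}" "J \<noteq> I" "card (\<Union>(A ` J)) \<le> card J" by auto
      have finJ: "finite J" using J fin finite_subset by blast
      have cJ: "card J < card I" using J fin by (simp add: psubset_card_mono psubsetI)
      have k3: "\<forall>i\<in>J. finite (A i)" using finA J by blast
      have k4: "\<forall>K\<subseteq>J. card K \<le> card (\<Union>(A ` K))" using hc J by blast
      obtain f1 where f1: "\<forall>i\<in>J. f1 i \<in> A i" "inj_on f1 J"
        using less.hyps[OF cJ finJ k3 k4] by blast
      let ?I = "I - J" and ?U = "\<Union>(A ` J)"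
      let ?A = "\<lambda>i. A i - ?U"
      have "card ?I = card I - card J" using J(1) finJ by (simp add: card_Diff_subset)
      moreover have "card J > 0" using finJ J(2) by (simp add: card_gt_0_iff)
      moreover have "card J \<le> card I" using J(1) fin card_mono by blast
      ultimately have cI: "card ?I < card I" by linarith
      have g3: "\<forall>i\<in>?I. finite (?A i)" using finA by simp
      have g2: "finite ?I" using fin by simp
      have g4: "\<forall>K\<subseteq>?I. card K \<le> card (\<Union>(?A ` K))"
      proof (intro allI impI)
        fix K assume K: "K \<subseteq> ?I"
        have KJ: "K \<inter> J = {}" using K by blast
        have finK: "finite K" using K fin finite_subset by blast
        have q1: "card (K \<union> J) \<le> card (\<Union>(A ` (K \<union> J)))" using hc[rule_format, of "K \<union> J"] K J(1) by blast
        have q2: "card (K \<union> J) = card K + card J" using KJ finK finJ by (simp add: card_Un_disjoint)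
        have q3: "\<Union>(A ` (K \<union> J)) = \<Union>(?A ` K) \<union> ?U" by blast
        have q4: "card (\<Union>(?A ` K) \<union> ?U) = card (\<Union>(?A ` K)) + card ?U"
        proof (rule card_Un_disjoint)
          have "K \<subseteq> I" using K by blast
          then show "finite (\<Union>(?A ` K))" using finU[of K] by (rule_tac finite_subset[of _ "\<Union>(A ` K)"]) auto
          show "finite ?U" using finU J(1) by blast
          show "(\<Union>(?A ` K)) \<inter> ?U = {}" by blast
        qed
        have "card (\<Union>(A ` (K \<union> J))) = card (\<Union>(?A ` K)) + card ?U" using q4 unfolding q3 .
        then show "card K \<le> card (\<Union>(?A ` K))" using J(4) q1 q2 by linarith
      qed
      obtain f2 where f2: "\<forall>i\<in>?I. f2 i \<in> ?A i" "inj_on f2 ?I"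
        using less.hyps[OF cI g2 g3 g4] by blast
      let ?f = "\<lambda>i. if i \<in> J then f1 i else f2 i"
      have "\<forall>i\<in>I. ?f i \<in> A i" using f1 f2 by auto
      moreover have "inj_on ?f I"
      proof (rule inj_onI)
        fix x y assume x: "x \<in> I" and y: "y \<in> I" and e: "?f x = ?f y"
        show "x = y"
        proof (cases "x \<in> J"; cases "y \<in> J")
          assume "x \<in> J" "y \<in> J" then show ?thesis using e f1(2) by (simp add: inj_on_def)
        next
          assume xy: "x \<in> J" "y \<notin> J"
          then have "f1 x \<in> ?U" using f1(1) by blast
          moreover have "f2 y \<notin> ?U" using f2(1) y xy by blast
          ultimately show ?thesis using e xy by simp
        next
          assume xy: "x \<notin> J" "y \<in> J"
          then have "f1 y \<in> ?U" using f1(1) by blast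
          moreover have "f2 x \<notin> ?U" using f2(1) x xy by blast
          ultimately show ?thesis using e xy by simp
        next
          assume "x \<notin> J" "y \<notin> J" then show ?thesis using e f2(2) x y by (simp add: inj_on_def)
        qed
      qed
      ultimately show ?thesis by (intro exI[of _ ?f]) simp
    qed
  qed
qed

lemma path_snoc:
  assumes p: "is_path Vs F ends p" and v: "v \<notin> set p" "v \<in> Vs" and e: "\<exists>e\<in>F. ends e = {last p, v}"
  shows "is_path Vs F ends (p @ [v])"
  unfolding is_path_def
proof (intro conjI allI impI)
  have pne: "p \<noteq> []" using p by (simp add: is_path_def)
  show "p @ [v] \<noteq> []" by simp
  show "distinct (p @ [v])" using p v by (simp add: is_path_def)
  show "set (p @ [v]) \<subseteq> Vs" using p v by (auto simp: is_path_def)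
  fix i assume i: "Suc i < length (p @ [v])"
  show "\<exists>e\<in>F. ends e = {(p @ [v]) ! i, (p @ [v]) ! Suc i}"
  proof (cases "Suc i < length p")
    case True then show ?thesis using p by (simp add: nth_append is_path_def)
  next
    case False
    then have "i = length p - 1" "Suc i = length p" using i by auto
    then show ?thesis using e pne by (auto simp: nth_append last_conv_nth)
  qed
qed

lemma path_monoV: "is_path Vs F ends p \<Longrightarrow> Vs \<subseteq> Vs' \<Longrightarrow> is_path Vs' F ends p"
  by (auto simp: is_path_def)

context esf begin

lemma comp_cls:
  assumes "C \<in> components (V - X) (del_verts_E (E - S) ends X) ends"
  shows "\<exists>u\<in>V - X. C = cls u"
proof -
  obtain u where u: "u \<in> V - X" "C = {v \<in> V - X. reachable (V - X) (del_verts_E (E - S) ends X) ends u v}"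
    using assms by (auto simp: components_def)
  have "C = cls u"
  proof
    show "C \<subseteq> cls u"
    proof
      fix v assume "v \<in> C"
      then obtain p where p: "is_path (V - X) (del_verts_E (E - S) ends X) ends p" "hd p = u" "last p = v"
        using u by (auto simp: reachable_def)
      have "(u,v) \<in> (adjrel (V - X) (del_verts_E (E - S) ends X) ends)\<^sup>*" using path_last[OF p(1)] p by simp
      moreover have "del_verts_E (E - S) ends X \<subseteq> E - S" by (auto simp: del_verts_E_def)
      ultimately have "(u,v) \<in> A0\<^sup>*" unfolding A0_def by (rule rtr_mono[OF _ subset_refl])
      then show "v \<in> cls u" by (simp add: cls_def)
    qed
  next
    show "cls u \<subseteq> C"
    proof
      fix v assume v: "v \<in> cls u"
      then have "(u,v) \<in> (adjrel (V - X) (del_verts_E (E - S) ends X) ends)\<^sup>*"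
        using subsetD[OF rtrancl_mono[OF adjrel_del]] by (simp add: cls_def A0_def)
      then have "reachable (V - X) (del_verts_E (E - S) ends X) ends u v"
        unfolding reachable_def using conn_path[OF _ u(1)] by blast
      moreover have "v \<in> V - X" using v cls_sub u(1) by blast
      ultimately show "v \<in> C" using u by blast
    qed
  qed
  then show ?thesis using u by blast
qed

lemma NZ_union: "NZ Z = (\<Union>z\<in>Z. NZ {z})"
  unfolding NZ_def by auto

end

theorem lemma4:
  fixes V :: "'v set" and E :: "'e set" and ends :: "'e \<Rightarrow> 'v set"
    and S :: "'e set" and k :: nat and X :: "'v set" and x :: 'v
  assumes G: "multigraph V E ends"
    and SE: "S \<subseteq> E"
    and dom: "dominant_solution V E ends S k X"
    and xX: "x \<in> X - verts_of ends S"
  shows "\<exists>P :: nat \<Rightarrow> 'v list.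
     (\<forall>i < card X + 2. is_path V (E - S) ends (P i) \<and>
                         hd (P i) \<in> verts_of ends S \<and> last (P i) \<in> X) \<and>
     (\<forall>i < 3. last (P i) = x) \<and>
     (\<forall>i < 3. \<forall>j < 3. i \<noteq> j \<longrightarrow> set (P i) \<inter> set (P j) = {x}) \<and>
     (\<forall>i < card X + 2. \<forall>j < card X + 2. i \<noteq> j \<and> (3 \<le> i \<or> 3 \<le> j) \<longrightarrow>
          set (P i) \<inter> set (P j) = {}) \<and>
     (\<forall>C \<in> components (V - X) (del_verts_E (E - S) ends X) ends.
        \<forall>i < card X + 2. \<forall>j < card X + 2.
          set (P i) \<inter> C \<noteq> {} \<longrightarrow> set (P j) \<inter> C \<noteq> {} \<longrightarrow> i = j)"
proof -
  have sol: "esfvs_solution V E ends S k X" using dom by (simp add: dominant_solution_def)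
  interpret esf V E ends S X
    using G SE sol by unfold_locales (auto simp: esfvs_solution_def)
  have TT: "verts_of ends S = T" by (simp add: T_def)
  have finX: "finite X" using XV finV finite_subset by blast
  have xX': "x \<in> X" "x \<notin> T" using xX TT by auto
  define n where "n = card X"
  have "card X > 0" using finX xX'(1) card_gt_0_iff by blast
  then have n1: "n \<ge> 1" by (simp add: n_def)
  have "card {3..<n+2} = card (X - {x})" using finX xX' n1 by (simp add: n_def)
  then obtain g where g: "bij_betw g {3..<n+2} (X - {x})"
    using bij_betw_iff_card[of "{3..<n+2}" "X - {x}"] finX by auto
  have gX: "g i \<in> X - {x}" if "i \<in> {3..<n+2}" for i using bij_betwE[OF g] that by blast
  define ow where "ow i = (if i < 3 then x else g i)" for i
  define I where "I = {i. i < n+2 \<and> (i < 3 \<or> g i \<notin> T)}"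
  have finI: "finite I" by (rule finite_subset[of _ "{..<n+2}"]) (auto simp: I_def)
  have owX: "ow i \<in> X" if "i < n+2" for i using that gX xX' by (auto simp: ow_def)
  have owXT: "ow i \<in> X - T" if "i \<in> I" for i using that gX xX' by (auto simp: ow_def I_def)
  have owinj: "ow i \<noteq> ow j" if "i < n+2" "j < n+2" "i \<noteq> j" "3 \<le> i \<or> 3 \<le> j" for i j
  proof (cases "3 \<le> i \<and> 3 \<le> j")
    case True
    then have "g i \<noteq> g j" using g that bij_betw_imp_inj_on[OF g] by (auto simp: inj_on_def)
    then show ?thesis using True by (simp add: ow_def)
  next
    case False
    then show ?thesis using that gX by (auto simp: ow_def)
  qed
  have hc: "\<forall>J\<subseteq>I. card J \<le> card (\<Union>((\<lambda>i. NZ {ow i}) ` J))"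
  proof (intro allI impI)
    fix J assume J: "J \<subseteq> I"
    have U: "\<Union>((\<lambda>i. NZ {ow i}) ` J) = NZ (ow ` J)" using NZ_union[of "ow ` J"] by auto
    show "card J \<le> card (\<Union>((\<lambda>i. NZ {ow i}) ` J))"
    proof (cases "J = {}")
      case True then show ?thesis by simp
    next
      case False
      have sub: "ow ` J \<subseteq> X - T" using J owXT by blast
      have hcz: "card (ow ` J) + 2 \<le> card (NZ (ow ` J))" using hall_cond[OF dom sub] False by simp
      have finJ: "finite J" using J finI finite_subset by blast
      define J3 where "J3 = J \<inter> {..<3}"
      define Jg where "Jg = J - {..<3}"
      have JgR: "Jg \<subseteq> {3..<n+2}" using J by (auto simp: Jg_def I_def)
      have injg: "inj_on g Jg" using bij_betw_imp_inj_on[OF g] JgR inj_on_subset by blast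
      have c1: "card J \<le> card J3 + card Jg"
      proof -
        have "J = J3 \<union> Jg" by (auto simp: J3_def Jg_def)
        then show ?thesis using card_Un_le[of J3 Jg] by simp
      qed
      have c2: "card J3 \<le> 3"
      proof -
        have "card J3 \<le> card {..<3::nat}" by (rule card_mono) (auto simp: J3_def)
        then show ?thesis by simp
      qed
      have c3: "card Jg = card (g ` Jg)" using injg by (simp add: card_image)
      have gsub: "g ` Jg \<subseteq> ow ` J"
      proof
        fix y assume "y \<in> g ` Jg"
        then obtain i where "i \<in> Jg" "y = g i" by blast
        then show "y \<in> ow ` J" by (auto simp: Jg_def ow_def)
      qed
      have xg: "x \<notin> g ` Jg" using gX JgR by blast
      have finO: "finite (ow ` J)" using finJ by simp
      have "card J \<le> card (ow ` J) + 2"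
      proof (cases "J3 = {}")
        case True
        then have "card J \<le> card (g ` Jg)" using c1 c3 by simp
        also have "\<dots> \<le> card (ow ` J)" using card_mono[OF finO gsub] .
        finally show ?thesis by simp
      next
        case False
        then obtain i where "i \<in> J" "i < 3" by (auto simp: J3_def)
        then have "x \<in> ow ` J" by (auto simp: ow_def)
        then have "insert x (g ` Jg) \<subseteq> ow ` J" using gsub by blast
        then have "card (insert x (g ` Jg)) \<le> card (ow ` J)" using card_mono[OF finO] by blast
        moreover have "card (insert x (g ` Jg)) = card (g ` Jg) + 1"
          using xg finJ by (simp add: Jg_def)
        ultimately show ?thesis using c1 c2 c3 by linarith
      qed
      then show ?thesis using U hcz by simp
    qed
  qed
  obtain K where K: "\<forall>i\<in>I. K i \<in> NZ {ow i}" "inj_on K I"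
    using hall[OF finI, of "\<lambda>i. NZ {ow i}"] NZ_fin hc by blast
  have Kd: "\<exists>u\<in>V - X. K i = cls u \<and> K i \<inter> T \<noteq> {} \<and> (\<exists>a\<in>K i. \<exists>e\<in>E - S. ends e = {a, ow i})"
    if "i \<in> I" for i using K(1) that unfolding NZ_def by blast
  have KV: "K i \<subseteq> V - X" if "i \<in> I" for i using Kd[OF that] cls_sub by blast
  have Kdisj: "K i \<inter> K j = {}" if ij: "i \<in> I" "j \<in> I" "i \<noteq> j" for i j
  proof -
    obtain u where u: "K i = cls u" using Kd[OF ij(1)] by blast
    obtain w where w: "K j = cls w" using Kd[OF ij(2)] by blast
    have "K i \<noteq> K j" using K(2) ij by (auto simp: inj_on_def)
    then show ?thesis using cls_disj u w by metis
  qed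
  define tt where "tt i = (SOME t. t \<in> T \<and> t \<in> K i)" for i
  define aa where "aa i = (SOME a. a \<in> K i \<and> (\<exists>e\<in>E - S. ends e = {a, ow i}))" for i
  define pp where "pp i = (SOME p. is_path (V - X) (E - S) ends p \<and> hd p = tt i \<and> last p = aa i)" for i
  have tt: "tt i \<in> T \<and> tt i \<in> K i" if iI: "i \<in> I" for i
  proof -
    have "\<exists>t. t \<in> T \<and> t \<in> K i" using Kd[OF that] by blast
    then show ?thesis unfolding tt_def by (rule someI_ex)
  qed
  have aa: "aa i \<in> K i \<and> (\<exists>e\<in>E - S. ends e = {aa i, ow i})" if "i \<in> I" for i
  proof -
    have "\<exists>a. a \<in> K i \<and> (\<exists>e\<in>E - S. ends e = {a, ow i})" using Kd[OF that] by blast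
    then show ?thesis unfolding aa_def by (rule someI_ex)
  qed
  have pp: "is_path (V - X) (E - S) ends (pp i) \<and> hd (pp i) = tt i \<and> last (pp i) = aa i" if iI: "i \<in> I" for i
  proof -
    obtain u where u: "u \<in> V - X" "K i = cls u" using Kd[OF iI] by blast
    have "(tt i, aa i) \<in> A0\<^sup>*" using tt[OF iI] aa[OF iI] u cls_conn[of "tt i" u "aa i"] by simp
    moreover have "tt i \<in> V - X" using tt[OF iI] KV[OF iI] by blast
    ultimately have "\<exists>p. is_path (V - X) (E - S) ends p \<and> hd p = tt i \<and> last p = aa i"
      unfolding A0_def by (rule conn_path)
    then show ?thesis unfolding pp_def by (rule someI_ex)
  qed
  have ppK: "set (pp i) \<subseteq> K i" if iI: "i \<in> I" for i
  proof
    fix v assume v: "v \<in> set (pp i)"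
    obtain u where u: "u \<in> V - X" "K i = cls u" using Kd[OF iI] by blast
    have "(tt i, v) \<in> A0\<^sup>*" using path_set[OF conjunct1[OF pp[OF iI]] v] pp[OF iI]
      by (simp add: A0_def)
    then have "v \<in> cls (tt i)" by (simp add: cls_def)
    moreover have "cls (tt i) = K i" using tt[OF iI] u cls_eq by simp
    ultimately show "v \<in> K i" by simp
  qed
  define P where "P i = (if i \<in> I then pp i @ [ow i] else [g i])" for i
  have Pset: "set (P i) \<subseteq> (if i \<in> I then K i else {}) \<union> {ow i}" if "i < n+2" for i
    using ppK that by (auto simp: P_def ow_def I_def)
  have Ppath: "is_path V (E - S) ends (P i) \<and> hd (P i) \<in> T \<and> last (P i) = ow i" if "i < n+2" for i
  proof (cases "i \<in> I")
    case True
    have p1: "is_path V (E - S) ends (pp i)" using path_monoV conjunct1[OF pp[OF True]] by blast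
    have "ow i \<notin> set (pp i)" using ppK[OF True] KV[OF True] owX[OF that] by blast
    moreover have "ow i \<in> V" using owX[OF that] XV by blast
    moreover have "\<exists>e\<in>E - S. ends e = {last (pp i), ow i}" using aa[OF True] pp[OF True] by simp
    ultimately have "is_path V (E - S) ends (pp i @ [ow i])" using path_snoc[OF p1] by blast
    moreover have "hd (pp i @ [ow i]) = tt i" using pp[OF True] by (simp add: is_path_def)
    ultimately show ?thesis using True tt[OF True] by (simp add: P_def)
  next
    case False
    then have "3 \<le> i" "g i \<in> T" using that by (auto simp: I_def)
    moreover have "g i \<in> V" using gX[of i] XV that \<open>3 \<le> i\<close> by auto
    ultimately show ?thesis using False by (simp add: P_def is_path_def ow_def)
  qed
  have I3: "i \<in> I" if "i < 3" for i using that n1 by (simp add: I_def)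
  show ?thesis
  proof (rule exI[of _ P], intro conjI)
    show "\<forall>i < card X + 2. is_path V (E - S) ends (P i) \<and> hd (P i) \<in> verts_of ends S \<and> last (P i) \<in> X"
      using Ppath owX TT by (simp add: n_def)
  next
    show "\<forall>i < 3. last (P i) = x" using Ppath n1 by (simp add: ow_def)
  next
    show "\<forall>i < 3. \<forall>j < 3. i \<noteq> j \<longrightarrow> set (P i) \<inter> set (P j) = {x}"
    proof (intro allI impI)
      fix i j :: nat assume ij: "i < 3" "j < 3" "i \<noteq> j"
      have "K i \<inter> K j = {}" using Kdisj I3 ij by blast
      moreover have "set (P i) = set (pp i) \<union> {x}" "set (P j) = set (pp j) \<union> {x}"
        using I3 ij by (auto simp: P_def ow_def)
      moreover have "x \<notin> K i" "x \<notin> K j" using KV I3 ij xX' by blast+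
      ultimately show "set (P i) \<inter> set (P j) = {x}" using ppK I3 ij by blast
    qed
  next
    show "\<forall>i < card X + 2. \<forall>j < card X + 2. i \<noteq> j \<and> (3 \<le> i \<or> 3 \<le> j) \<longrightarrow>
          set (P i) \<inter> set (P j) = {}"
    proof (intro allI impI)
      fix i j assume ij0: "i < card X + 2" "j < card X + 2" "i \<noteq> j \<and> (3 \<le> i \<or> 3 \<le> j)"
      then have ij: "i < n+2" "j < n+2" "i \<noteq> j" "3 \<le> i \<or> 3 \<le> j" by (auto simp: n_def)
      have o: "ow i \<noteq> ow j" using owinj ij by blast
      have oX: "ow i \<in> X" "ow j \<in> X" using owX ij by auto
      have KK: "(if i \<in> I then K i else {}) \<inter> (if j \<in> I then K j else {}) = {}"
        using Kdisj ij by auto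
      have KX: "(if i \<in> I then K i else {}) \<inter> X = {}" "(if j \<in> I then K j else {}) \<inter> X = {}"
        using KV by auto
      show "set (P i) \<inter> set (P j) = {}"
        using Pset[OF ij(1)] Pset[OF ij(2)] o oX KK KX by blast
    qed
  next
    show "\<forall>C \<in> components (V - X) (del_verts_E (E - S) ends X) ends.
        \<forall>i < card X + 2. \<forall>j < card X + 2.
          set (P i) \<inter> C \<noteq> {} \<longrightarrow> set (P j) \<inter> C \<noteq> {} \<longrightarrow> i = j"
    proof (intro ballI allI impI)
      fix C i j assume C: "C \<in> components (V - X) (del_verts_E (E - S) ends X) ends"
        and i: "i < card X + 2" and j: "j < card X + 2"
        and Ci: "set (P i) \<inter> C \<noteq> {}" and Cj: "set (P j) \<inter> C \<noteq> {}"
      obtain u where u: "u \<in> V - X" "C = cls u" using comp_cls[OF C] by blast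
      have CX: "C \<inter> X = {}" using u cls_sub by blast
      have hit: "l \<in> I \<and> K l = C" if l: "l < n+2" "set (P l) \<inter> C \<noteq> {}" for l
      proof -
        have "(if l \<in> I then K l else {}) \<inter> C \<noteq> {}" using Pset[OF l(1)] l(2) owX[OF l(1)] CX by blast
        then have lI: "l \<in> I" and KC: "K l \<inter> C \<noteq> {}" by (auto split: if_splits)
        obtain w where "K l = cls w" using Kd[OF lI] by blast
        then have "K l = C" using u KC cls_disj by metis
        then show ?thesis using lI by simp
      qed
      have "i \<in> I" "K i = C" using hit[of i] i Ci by (auto simp: n_def)
      moreover have "j \<in> I" "K j = C" using hit[of j] j Cj by (auto simp: n_def)
      ultimately show "i = j" using K(2) by (auto simp: inj_on_def)
    qed
  qed
qed


end
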